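(* Let $d,n,m\in\mathbb{N}$, $(a_{ij})\in\mathbb{R}^{n\times m}$ with no row identically zero, and $\alpha_1,\ldots,\alpha_n\in\mathbb{R}$. If $$\sum_{i=1}^n \alpha_i h\Big(\sum_{j=1}^m a_{ij}Z_j\Big)\le 0$$ holds for all independent $\mathbb{R}^d$-valued continuous random variables $Z_1,\ldots,Z_m$ (for which all entropies involved are finite), then $\sum_{i=1}^n\alpha_i=0$.
   Context: $h(X)=\int f_X\log\frac1{f_X}$ is the differential entropy of an $\mathbb{R}^d$-valued random vector with Lebesgue density $f_X$; "continuous" means absolutely continuous w.r.t. Lebesgue measure. *)

theory Defs
  imports "HOL-Probability.Probability"
begin

text \<open>Differential entropy (natural logarithm) of a random vector X on M:
  the library entropy with base e relative to Lebesgue measure, i.e.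
  minus the KL divergence of the law of X w.r.t. lborel, which equals
  the integral of f log (1/f) for a density f.\<close>
definition diff_entropy :: "'w measure \<Rightarrow> ('w \<Rightarrow> 'a::euclidean_space) \<Rightarrow> real" where
  "diff_entropy M X = prob_space.entropy M (exp 1) lborel X"

definition continuous_rv :: "'w measure \<Rightarrow> ('w \<Rightarrow> 'a::euclidean_space) \<Rightarrow> bool" where
  "continuous_rv M X \<longleftrightarrow> X \<in> borel_measurable M \<and>
     absolutely_continuous lborel (distr M lborel X)"

definition finite_diff_entropy :: "'w measure \<Rightarrow> ('w \<Rightarrow> 'a::euclidean_space) \<Rightarrow> bool" where
  "finite_diff_entropy M X \<longleftrightarrow>
     (\<exists>f::'a \<Rightarrow> real. (\<forall>x. 0 \<le> f x) \<and> distributed M lborel X (\<lambda>x. ennreal (f x)) \<and>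
        integrable lborel (\<lambda>x. f x * ln (f x)))"

end

theory Submission
  imports Defs
begin


lemma density_bound:
  fixes X :: "'w \<Rightarrow> 'a::euclidean_space"
  assumes M: "prob_space M" and X[measurable]: "X \<in> borel_measurable M"
    and K: "0 < K"
    and bnd: "\<And>A. A \<in> sets borel \<Longrightarrow> ennreal K * emeasure M (X -` A \<inter> space M) \<le> emeasure lborel A"
    and supp: "AE \<omega> in M. X \<omega> \<in> S" and S[measurable]: "S \<in> sets borel"
  shows "\<exists>f. f \<in> borel_measurable borel \<and> (\<forall>x. 0 \<le> f x) \<and> (\<forall>x. f x \<le> 1/K) \<and>
     (\<forall>x. f x \<noteq> 0 \<longrightarrow> x \<in> S) \<and> distributed M lborel X (\<lambda>x. ennreal (f x))"
proof -
  interpret prob_space M by fact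
  define N where "N = distr M lborel X"
  have ac: "absolutely_continuous lborel N"
    unfolding absolutely_continuous_def
  proof
    fix A :: "'a set" assume A: "A \<in> null_sets lborel"
    then have Ab: "A \<in> sets borel" by auto
    have "ennreal K * emeasure M (X -` A \<inter> space M) \<le> 0"
      using bnd[OF Ab] A by auto
    then have "emeasure M (X -` A \<inter> space M) = 0"
      using K by (auto simp: ennreal_zero_less_mult_iff)
    then show "A \<in> null_sets N"
      using Ab by (auto simp: N_def null_sets_def emeasure_distr)
  qed
  obtain g where g[measurable]: "g \<in> borel_measurable lborel" and gN: "density lborel g = N"
    using sigma_finite_measure.Radon_Nikodym[OF sigma_finite_lborel ac] by (auto simp: N_def)
  have gA: "(\<integral>\<^sup>+x. g x * indicator A x \<partial>lborel) = emeasure M (X -` A \<inter> space M)"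
    if "A \<in> sets borel" for A
  proof -
    have "(\<integral>\<^sup>+x. g x * indicator A x \<partial>lborel) = emeasure (density lborel g) A"
      using that by (simp add: emeasure_density)
    also have "\<dots> = emeasure M (X -` A \<inter> space M)"
      using that by (simp add: gN N_def emeasure_distr)
    finally show ?thesis .
  qed
  have le: "AE x in lborel. g x \<le> ennreal (1/K)"
  proof -
    have "AE x in lborel. x \<notin> {x. ennreal (1/K) < g x} \<inter> cball 0 (real n)" for n
    proof -
      define B where "B = {x. ennreal (1/K) < g x} \<inter> cball 0 (real n)"
      have B[measurable]: "B \<in> sets borel" unfolding B_def by measurable
      have Bfin: "emeasure lborel B < \<infinity>"
      proof -
        have "emeasure lborel B \<le> emeasure lborel (cball (0::'a) (real n))"
          by (intro emeasure_mono) (auto simp: B_def)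
        also have "\<dots> < \<infinity>" by (rule emeasure_lborel_cball_finite)
        finally show ?thesis .
      qed
      have i1: "(\<integral>\<^sup>+x. ennreal (1/K) * indicator B x \<partial>lborel) = ennreal (1/K) * emeasure lborel B"
        using B by (simp add: nn_integral_cmult_indicator)
      have "AE x in lborel. g x * indicator B x \<le> ennreal (1/K) * indicator B x"
      proof (rule ccontr)
        assume nAE: "\<not> ?thesis"
        have "(\<integral>\<^sup>+x. ennreal (1/K) * indicator B x \<partial>lborel) < (\<integral>\<^sup>+x. g x * indicator B x \<partial>lborel)"
        proof (rule nn_integral_less)
          show "(\<integral>\<^sup>+x. ennreal (1/K) * indicator B x \<partial>lborel) \<noteq> \<infinity>"
            using i1 Bfin by (simp add: ennreal_mult_eq_top_iff)
          show "AE x in lborel. ennreal (1/K) * indicator B x \<le> g x * indicator B x"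
            by (auto simp: B_def indicator_def less_imp_le)
        qed (use nAE in auto)
        also have "\<dots> = emeasure M (X -` B \<inter> space M)" using gA B by simp
        also have "\<dots> \<le> ennreal (1/K) * emeasure lborel B"
        proof -
          have "ennreal K * emeasure M (X -` B \<inter> space M) \<le> emeasure lborel B" using bnd B by simp
          then have "ennreal (1/K) * (ennreal K * emeasure M (X -` B \<inter> space M)) \<le> ennreal (1/K) * emeasure lborel B"
            by (rule mult_left_mono) simp
          then show ?thesis using K
            by (simp add: mult.assoc[symmetric] ennreal_mult[symmetric])
        qed
        finally show False using i1 by simp
      qed
      then show ?thesis
        by eventually_elim (auto simp: B_def indicator_def split: if_splits)
    qed
    then have "AE x in lborel. \<forall>n. x \<notin> {x. ennreal (1/K) < g x} \<inter> cball 0 (real n)"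
      by (simp only: AE_all_countable) blast
    then show ?thesis
    proof eventually_elim
      case (elim x)
      obtain n where "norm x \<le> real n" using real_arch_simple by blast
      with elim[rule_format, of n] show ?case by (auto simp: not_less)
    qed
  qed
  have sup: "AE x in lborel. x \<notin> S \<longrightarrow> g x = 0"
  proof -
    have "(\<integral>\<^sup>+x. g x * indicator (- S) x \<partial>lborel) = emeasure M (X -` (- S) \<inter> space M)"
      using gA by simp
    also have "\<dots> = 0"
    proof -
      have e: "X -` (- S) \<inter> space M = {\<omega>\<in>space M. \<not> X \<omega> \<in> S}" by auto
      show ?thesis unfolding e using supp by (subst (asm) AE_iff_measurable[OF _ refl]) auto
    qed
    finally have "AE x in lborel. g x * indicator (- S) x = 0"
      by (subst (asm) nn_integral_0_iff_AE) auto
    then show ?thesis by eventually_elim (auto simp: indicator_def)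
  qed
  define f where "f x = (if x \<in> S \<and> g x \<le> ennreal (1/K) then enn2real (g x) else 0)" for x
  have f[measurable]: "f \<in> borel_measurable borel" unfolding f_def by measurable
  have fg: "AE x in lborel. g x = ennreal (f x)"
    using le sup by eventually_elim (auto simp: f_def ennreal_enn2real_if top_unique)
  have "distributed M lborel X (\<lambda>x. ennreal (f x))"
    unfolding distributed_def
  proof (intro conjI)
    show "distr M lborel X = density lborel (\<lambda>x. ennreal (f x))"
    proof -
      have "density lborel g = density lborel (\<lambda>x. ennreal (f x))"
        by (rule density_cong) (use fg in auto)
      then show ?thesis using gN by (simp add: N_def)
    qed
  qed auto
  moreover have "\<forall>x. f x \<le> 1/K"
    using K by (auto simp: f_def enn2real_leI)
  moreover have "\<forall>x. 0 \<le> f x" by (auto simp: f_def)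
  moreover have "\<forall>x. f x \<noteq> 0 \<longrightarrow> x \<in> S" by (auto simp: f_def)
  ultimately show ?thesis using f by blast
qed



lemma xlnx_bound:
  fixes y C :: real assumes "0 \<le> y" "y \<le> C"
  shows "\<bar>y * ln y\<bar> \<le> 1 + C * C"
proof (cases "y = 0")
  case True then show ?thesis by simp
next
  case False
  then have y: "0 < y" using assms by simp
  show ?thesis
  proof (cases "y \<le> 1")
    case True
    have "ln y \<le> 0" using True y by simp
    have "- ln y \<le> 1 / y - 1"
      using ln_le_minus_one[of "1/y"] y by (simp add: ln_div)
    then have "y * (- ln y) \<le> y * (1/y - 1)" using y by (intro mult_left_mono) auto
    moreover have "y * (1/y - 1) = 1 - y" using y by (simp add: field_simps)
    ultimately have "y * (- ln y) \<le> 1 - y" by simp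
    moreover have "y * ln y \<le> 0" using \<open>ln y \<le> 0\<close> y by (simp add: mult_nonneg_nonpos)
    moreover have "0 \<le> C * C" by simp
    ultimately show ?thesis using y by (simp only: abs_of_nonpos)
  next
    case False
    then have "0 \<le> ln y" "ln y \<le> y" using y ln_le_minus_one[of y] by auto
    then have "y * ln y \<le> C * C" using assms y
      by (meson mult_mono order.trans less_imp_le)
    then show ?thesis using \<open>0 \<le> ln y\<close> y by simp
  qed
qed

lemma entropy_bounds:
  fixes X :: "'w \<Rightarrow> 'a::euclidean_space"
  assumes M: "prob_space M" and f[measurable]: "f \<in> borel_measurable borel"
    and nn: "\<forall>x. 0 \<le> f x" and le: "\<forall>x. f x \<le> C"
    and supp: "\<forall>x. f x \<noteq> 0 \<longrightarrow> x \<in> S" and S[measurable]: "S \<in> sets borel"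
    and Sfin: "emeasure lborel S < \<infinity>"
    and D: "distributed M lborel X (\<lambda>x. ennreal (f x))"
  shows "finite_diff_entropy M X \<and> - ln C \<le> diff_entropy M X \<and> diff_entropy M X \<le> ln (measure lborel S)"
proof -
  interpret information_space M "exp 1"
    using M by (simp add: information_space_def information_space_axioms_def)
  have intS: "integrable lborel (indicator S :: 'a \<Rightarrow> real)"
    using Sfin by (simp add: integrable_indicator_iff)
  have intfl: "integrable lborel (\<lambda>x. f x * ln (f x))"
  proof (rule Bochner_Integration.integrable_bound)
    show "integrable lborel (\<lambda>x. (1 + C * C) * indicator S x)"
      using intS by simp
    show "AE x in lborel. norm (f x * ln (f x)) \<le> norm ((1 + C * C) * indicator S x)"
    proof (intro AE_I2)
      fix x
      have "\<bar>f x * ln (f x)\<bar> \<le> 1 + C * C" using xlnx_bound nn le by blast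
      moreover have "f x * ln (f x) = 0" if "x \<notin> S" using supp that by auto
      moreover have "0 \<le> 1 + C * C" by simp
      ultimately show "norm (f x * ln (f x)) \<le> norm ((1 + C * C) * indicator S x)"
        by (cases "x \<in> S") (auto simp: indicator_def)
    qed
  qed simp
  have intf: "integrable lborel f"
  proof (rule Bochner_Integration.integrable_bound)
    show "integrable lborel (\<lambda>x. C * indicator S x)"
      using intS by simp
    show "AE x in lborel. norm (f x) \<le> norm (C * indicator S x)"
    proof (intro AE_I2)
      fix x
      have "0 \<le> C" using nn le by (meson order.trans)
      then show "norm (f x) \<le> norm (C * indicator S x)"
        using nn le supp by (cases "x \<in> S") (auto simp: indicator_def, metis order_refl)
    qed
  qed simp
  have int1: "(\<integral>x. f x \<partial>lborel) = 1"
    using distributed_integral[OF D, of "\<lambda>_. 1"] nn by (simp add: prob_space)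
  have fde: "finite_diff_entropy M X"
    unfolding finite_diff_entropy_def using nn D intfl by blast
  have ent: "diff_entropy M X = - (\<integral>x. f x * ln (f x) \<partial>lborel)"
    unfolding diff_entropy_def using entropy_distr[OF D] nn by (simp add: log_def)
  have Cpos: "0 < C"
  proof (rule ccontr)
    assume "\<not> 0 < C"
    then have "\<forall>x. f x = 0" using nn le by (meson antisym order.trans not_less)
    then show False using int1 by simp
  qed
  have lower: "- ln C \<le> diff_entropy M X"
  proof -
    have "(\<integral>x. f x * ln (f x) \<partial>lborel) \<le> (\<integral>x. ln C * f x \<partial>lborel)"
    proof (rule integral_mono)
      show "integrable lborel (\<lambda>x. ln C * f x)" using intf by simp
      fix x
      show "f x * ln (f x) \<le> ln C * f x"
      proof (cases "f x = 0")
        case False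
        then have "0 < f x" using nn by (metis less_eq_real_def)
        then have "ln (f x) \<le> ln C" using le Cpos by simp
        then show ?thesis using nn mult_left_mono[of "ln (f x)" "ln C" "f x"] by (simp add: mult.commute)
      qed simp
    qed (use intfl in auto)
    also have "\<dots> = ln C" using int1 by simp
    finally show ?thesis using ent by simp
  qed
  let ?Z = "{x \<in> space lborel. f x \<noteq> 0}"
  have Zsub: "?Z \<subseteq> S" using supp by auto
  have Zfin: "emeasure lborel ?Z \<noteq> top"
  proof -
    have "emeasure lborel ?Z \<le> emeasure lborel S" by (rule emeasure_mono[OF Zsub]) simp
    then show ?thesis using Sfin by (auto simp: top_unique)
  qed
  have "entropy (exp 1) lborel X \<le> log (exp 1) (measure lborel ?Z)"
  proof (rule entropy_le[OF D])
    show "integrable lborel (\<lambda>x. - f x * log (exp 1) (f x))"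
      using intfl by (simp add: log_def)
  qed (use nn Zfin in simp_all)
  then have up1: "diff_entropy M X \<le> ln (measure lborel ?Z)"
    by (simp add: diff_entropy_def log_def)
  have Zpos: "0 < measure lborel ?Z"
  proof -
    have "(\<integral>x. f x \<partial>lborel) \<le> (\<integral>x. C * indicator ?Z x \<partial>lborel)"
    proof (rule integral_mono)
      show "integrable lborel (\<lambda>x. C * indicator ?Z x)"
        using Zfin by (simp add: integrable_indicator_iff less_top)
      fix x show "f x \<le> C * indicator ?Z x" using le by (auto simp: indicator_def)
    qed (use intf in auto)
    then have "1 \<le> C * measure lborel ?Z" using int1 by simp
    then show ?thesis using measure_nonneg[of lborel ?Z]
      by (metis less_eq_real_def mult_zero_right not_one_le_zero)
  qed
  have "measure lborel ?Z \<le> measure lborel S"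
  proof (rule measure_mono_fmeasurable[OF Zsub])
    show "?Z \<in> sets lborel" by simp
    show "S \<in> fmeasurable lborel" using Sfin by (simp add: fmeasurable_def)
  qed
  then have "ln (measure lborel ?Z) \<le> ln (measure lborel S)" using Zpos by simp
  with up1 have "diff_entropy M X \<le> ln (measure lborel S)" by simp
  with fde lower show ?thesis by blast
qed



definition U :: "'a::euclidean_space measure" where
  "U = density lborel (indicator (cbox 0 One))"

lemma sets_U[simp, measurable_cong]: "sets U = sets borel"
  by (simp add: U_def)

lemma space_U[simp]: "space U = UNIV"
  by (simp add: U_def)

lemma prob_U: "prob_space (U :: 'a::euclidean_space measure)"
proof
  have "emeasure lborel (cbox (0::'a) One) = 1"
    by (simp add: emeasure_lborel_cbox_eq)
  then show "emeasure U (space U) = 1"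
    by (simp add: U_def emeasure_density nn_integral_indicator)
qed

lemma affine_nn:
  fixes g :: "'a::euclidean_space \<Rightarrow> ennreal" and t :: 'a
  assumes c: "c \<noteq> 0" and g[measurable]: "g \<in> borel_measurable borel"
  shows "ennreal (\<bar>c\<bar> ^ DIM('a)) * (\<integral>\<^sup>+y. g (t + c *\<^sub>R y) \<partial>lborel) = (\<integral>\<^sup>+x. g x \<partial>lborel)"
proof -
  have "(\<integral>\<^sup>+x. g x \<partial>lborel) =
    (\<integral>\<^sup>+x. g x \<partial>density (distr lborel borel (\<lambda>x. t + c *\<^sub>R x)) (\<lambda>_. ennreal (\<bar>c\<bar>^DIM('a))))"
    using lborel_affine[OF c, of t] by simp
  also have "\<dots> = (\<integral>\<^sup>+x. ennreal (\<bar>c\<bar>^DIM('a)) * g x \<partial>distr lborel borel (\<lambda>x. t + c *\<^sub>R x))"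
    by (subst nn_integral_density) auto
  also have "\<dots> = (\<integral>\<^sup>+y. ennreal (\<bar>c\<bar>^DIM('a)) * g (t + c *\<^sub>R y) \<partial>lborel)"
    by (subst nn_integral_distr) auto
  also have "\<dots> = ennreal (\<bar>c\<bar>^DIM('a)) * (\<integral>\<^sup>+y. g (t + c *\<^sub>R y) \<partial>lborel)"
    by (subst nn_integral_cmult) auto
  finally show ?thesis ..
qed

lemma key_bound:
  fixes c :: "nat \<Rightarrow> real" and A :: "'a::euclidean_space set"
  assumes j0: "j0 < m" and c: "c j0 \<noteq> 0" and A[measurable]: "A \<in> sets borel"
  shows "ennreal (\<bar>c j0\<bar> ^ DIM('a)) *
     emeasure (PiM {..<m} (\<lambda>_. U)) ((\<lambda>\<omega>. \<Sum>j<m. c j *\<^sub>R \<omega> j) -` A \<inter> space (PiM {..<m} (\<lambda>_. U::'a measure)))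
     \<le> emeasure lborel A"
proof -
  interpret product_sigma_finite "\<lambda>_::nat. U::'a measure"
    by (simp add: product_sigma_finite_def prob_space_imp_sigma_finite prob_U)
  define I where "I = {..<m} - {j0}"
  have Ins: "insert j0 I = {..<m}" and jI: "j0 \<notin> I" and fI: "finite I"
    using j0 by (auto simp: I_def)
  define X where "X = (\<lambda>\<omega>::nat \<Rightarrow> 'a. \<Sum>j<m. c j *\<^sub>R \<omega> j)"
  define s where "s = (\<lambda>\<omega>::nat \<Rightarrow> 'a. \<Sum>j\<in>I. c j *\<^sub>R \<omega> j)"
  have X[measurable]: "X \<in> borel_measurable (PiM {..<m} (\<lambda>_. U))"
    unfolding X_def by measurable
  have Xupd: "X (x(j0 := y)) = s x + c j0 *\<^sub>R y" for x y
  proof -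
    have "X (x(j0 := y)) = c j0 *\<^sub>R y + (\<Sum>j\<in>I. c j *\<^sub>R (x(j0 := y)) j)"
      unfolding X_def Ins[symmetric] using fI jI by (simp add: sum.insert)
    also have "(\<Sum>j\<in>I. c j *\<^sub>R (x(j0 := y)) j) = s x"
      unfolding s_def using jI by (intro sum.cong) auto
    finally show ?thesis by (metis add.commute)
  qed
  let ?P = "PiM {..<m} (\<lambda>_. U::'a measure)"
  have "emeasure ?P (X -` A \<inter> space ?P) = (\<integral>\<^sup>+\<omega>. indicator (X -` A \<inter> space ?P) \<omega> \<partial>?P)"
    by (rule nn_integral_indicator[symmetric]) (rule measurable_sets[OF X A])
  also have "\<dots> = (\<integral>\<^sup>+\<omega>. indicator A (X \<omega>) \<partial>?P)"
    by (rule nn_integral_cong) (auto simp: indicator_def)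
  also have "\<dots> = (\<integral>\<^sup>+x. (\<integral>\<^sup>+y. indicator A (X (x(j0 := y))) \<partial>U) \<partial>PiM I (\<lambda>_. U))"
    unfolding Ins[symmetric] by (rule product_nn_integral_insert[OF fI jI]) (simp add: Ins)
  also have "\<dots> = (\<integral>\<^sup>+x. (\<integral>\<^sup>+y. indicator A (s x + c j0 *\<^sub>R y) \<partial>U) \<partial>PiM I (\<lambda>_. U))"
    by (simp add: Xupd)
  finally have eq: "emeasure ?P (X -` A \<inter> space ?P) = \<dots>" .
  have inner: "ennreal (\<bar>c j0\<bar> ^ DIM('a)) * (\<integral>\<^sup>+y. indicator A (t + c j0 *\<^sub>R y) \<partial>U) \<le> emeasure lborel A" for t
  proof -
    have "(\<integral>\<^sup>+y. indicator A (t + c j0 *\<^sub>R y) \<partial>U) =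
        (\<integral>\<^sup>+y. indicator (cbox 0 One) y * indicator A (t + c j0 *\<^sub>R y) \<partial>lborel)"
      unfolding U_def by (subst nn_integral_density) auto
    also have "\<dots> \<le> (\<integral>\<^sup>+y. indicator A (t + c j0 *\<^sub>R y) \<partial>lborel)"
      by (intro nn_integral_mono) (auto simp: indicator_def)
    finally have "ennreal (\<bar>c j0\<bar> ^ DIM('a)) * (\<integral>\<^sup>+y. indicator A (t + c j0 *\<^sub>R y) \<partial>U)
        \<le> ennreal (\<bar>c j0\<bar> ^ DIM('a)) * (\<integral>\<^sup>+y. indicator A (t + c j0 *\<^sub>R y) \<partial>lborel)"
      by (rule mult_left_mono) simp
    also have "\<dots> = (\<integral>\<^sup>+x. indicator A x \<partial>lborel)"
      by (rule affine_nn[OF c]) simp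
    also have "\<dots> = emeasure lborel A" by simp
    finally show ?thesis .
  qed
  interpret PI: prob_space "PiM I (\<lambda>_. U::'a measure)"
    by (rule prob_space_PiM) (rule prob_U)
  have "ennreal (\<bar>c j0\<bar> ^ DIM('a)) * (\<integral>\<^sup>+x. (\<integral>\<^sup>+y. indicator A (s x + c j0 *\<^sub>R y) \<partial>U) \<partial>PiM I (\<lambda>_. U))
      = (\<integral>\<^sup>+x. ennreal (\<bar>c j0\<bar> ^ DIM('a)) * (\<integral>\<^sup>+y. indicator A (s x + c j0 *\<^sub>R y) \<partial>U) \<partial>PiM I (\<lambda>_. U))"
    by (rule nn_integral_cmult[symmetric]) (unfold s_def, measurable)
  also have "\<dots> \<le> (\<integral>\<^sup>+x. emeasure lborel A \<partial>PiM I (\<lambda>_. U::'a measure))"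
    apply (rule Nonnegative_Lebesgue_Integration.nn_integral_mono)
    using inner by blast
  also have "\<dots> = emeasure lborel A"
    by (simp add: PI.emeasure_space_1)
  finally show ?thesis using eq by (simp add: X_def)
qed



lemma row_facts:
  fixes c :: "nat \<Rightarrow> real"
  assumes j0: "j0 < m" and c: "c j0 \<noteq> 0"
  defines "P \<equiv> PiM {..<m} (\<lambda>_. U::'a::euclidean_space measure)"
  defines "X \<equiv> (\<lambda>\<omega>. \<Sum>j<m. c j *\<^sub>R \<omega> j)"
  shows "finite_diff_entropy P X \<and> real DIM('a) * ln \<bar>c j0\<bar> \<le> diff_entropy P X \<and>
     diff_entropy P X \<le> real DIM('a) * ln (2 * (\<Sum>j<m. \<bar>c j\<bar>))"
proof -
  have PP: "prob_space P" unfolding P_def by (rule prob_space_PiM) (rule prob_U)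
  interpret prob_space P by (rule PP)
  have X[measurable]: "X \<in> borel_measurable P" unfolding X_def P_def by measurable
  define R where "R = (\<Sum>j<m. \<bar>c j\<bar>)"
  have Rge: "\<bar>c j0\<bar> \<le> R" unfolding R_def using j0
    by (intro member_le_sum) auto
  then have Rpos: "0 < R" using c by simp
  define S where "S = cbox (- (R *\<^sub>R One)) (R *\<^sub>R (One::'a))"
  have S[measurable]: "S \<in> sets borel" by (simp add: S_def)
  have memS: "x \<in> S \<longleftrightarrow> (\<forall>b\<in>Basis. \<bar>x \<bullet> b\<bar> \<le> R)" for x
    by (auto simp: S_def mem_box abs_le_iff inner_minus_left)
  have cube: "AE \<omega> in P. \<forall>j\<in>{..<m}. \<omega> j \<in> cbox 0 One"
  proof (subst AE_ball_countable)
    show "countable {..<m}" by simp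
    show "\<forall>j\<in>{..<m}. AE \<omega> in P. \<omega> j \<in> cbox 0 One"
    proof
      fix j assume "j \<in> {..<m}"
      moreover have "AE y in U. y \<in> cbox (0::'a) One"
        unfolding U_def by (subst AE_density) (auto simp: indicator_def)
      ultimately show "AE \<omega> in P. \<omega> j \<in> cbox 0 One"
        unfolding P_def by (intro AE_PiM_component prob_U) auto
    qed
  qed
  have supp: "AE \<omega> in P. X \<omega> \<in> S"
    using cube
  proof eventually_elim
    case (elim \<omega>)
    show ?case unfolding memS
    proof
      fix b :: 'a assume b: "b \<in> Basis"
      have "\<bar>X \<omega> \<bullet> b\<bar> = \<bar>\<Sum>j<m. c j * (\<omega> j \<bullet> b)\<bar>"
        by (simp add: X_def inner_sum_left)
      also have "\<dots> \<le> (\<Sum>j<m. \<bar>c j * (\<omega> j \<bullet> b)\<bar>)" by (rule sum_abs)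
      also have "\<dots> \<le> (\<Sum>j<m. \<bar>c j\<bar>)"
      proof (rule sum_mono)
        fix j assume "j \<in> {..<m}"
        then have "0 \<le> \<omega> j \<bullet> b" "\<omega> j \<bullet> b \<le> 1" using elim b by (auto simp: mem_box)
        then show "\<bar>c j * (\<omega> j \<bullet> b)\<bar> \<le> \<bar>c j\<bar>"
          by (simp add: abs_mult mult_left_le)
      qed
      finally show "\<bar>X \<omega> \<bullet> b\<bar> \<le> R" by (simp add: R_def)
    qed
  qed
  define K where "K = \<bar>c j0\<bar> ^ DIM('a)"
  have Kpos: "0 < K" using c by (simp add: K_def)
  have bnd: "ennreal K * emeasure P (X -` A \<inter> space P) \<le> emeasure lborel A" if "A \<in> sets borel" for A
    using key_bound[of j0 m c A, OF j0 c that] by (simp add: K_def P_def X_def)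
  obtain f where f: "f \<in> borel_measurable borel" "\<forall>x. 0 \<le> f x" "\<forall>x. f x \<le> 1/K"
      "\<forall>x. f x \<noteq> 0 \<longrightarrow> x \<in> S" "distributed P lborel X (\<lambda>x. ennreal (f x))"
    using density_bound[OF PP X Kpos bnd supp S] by blast
  have mS: "emeasure lborel S = ennreal ((2 * R) ^ DIM('a))"
    using Rpos by (simp add: S_def emeasure_lborel_cbox_eq inner_simps prod_constant)
  have Sfin: "emeasure lborel S < \<infinity>" using mS by simp
  have mS': "measure lborel S = (2 * R) ^ DIM('a)"
    using mS Rpos by (simp add: measure_def)
  have E: "finite_diff_entropy P X \<and> - ln (1/K) \<le> diff_entropy P X \<and> diff_entropy P X \<le> ln (measure lborel S)"
    by (rule entropy_bounds[OF PP f(1,2,3,4) S Sfin f(5)])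
  have l: "- ln (1/K) = real DIM('a) * ln \<bar>c j0\<bar>"
    using c by (simp add: K_def ln_div ln_realpow)
  have u: "ln (measure lborel S) = real DIM('a) * ln (2 * R)"
    using Rpos ln_realpow[of "2 * R" "DIM('a)"] by (simp only: mS')
  show ?thesis using E l u by (simp add: R_def)
qed



lemma final_arith:
  fixes h :: "real \<Rightarrow> nat \<Rightarrow> real" and \<alpha> L V :: "nat \<Rightarrow> real" and D :: real
  assumes D: "0 < D"
    and ineq: "\<And>t. 0 < t \<Longrightarrow> (\<Sum>i<n. \<alpha> i * h t i) \<le> 0"
    and bd: "\<And>t i. 0 < t \<Longrightarrow> i < n \<Longrightarrow> L i \<le> h t i - D * ln t \<and> h t i - D * ln t \<le> V i"
  shows "(\<Sum>i<n. \<alpha> i) = 0"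
proof (rule ccontr)
  assume S0: "(\<Sum>i<n. \<alpha> i) \<noteq> 0"
  define S where "S = (\<Sum>i<n. \<alpha> i)"
  define B where "B = (\<Sum>i<n. \<bar>\<alpha> i\<bar> * (\<bar>L i\<bar> + \<bar>V i\<bar>))"
  have key: "D * ln t * S \<le> B" if t: "0 < t" for t
  proof -
    have "(\<Sum>i<n. \<alpha> i * h t i) = D * ln t * S + (\<Sum>i<n. \<alpha> i * (h t i - D * ln t))"
      by (simp add: S_def sum_distrib_left right_diff_distrib sum_subtractf algebra_simps)
    moreover have "- (\<Sum>i<n. \<alpha> i * (h t i - D * ln t)) \<le> B"
    proof -
      have "- (\<Sum>i<n. \<alpha> i * (h t i - D * ln t)) \<le> (\<Sum>i<n. \<bar>\<alpha> i * (h t i - D * ln t)\<bar>)"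
        using sum_abs[of "\<lambda>i. \<alpha> i * (h t i - D * ln t)" "{..<n}"] by linarith
      also have "\<dots> \<le> B" unfolding B_def
      proof (rule sum_mono)
        fix i assume "i \<in> {..<n}"
        then have "\<bar>h t i - D * ln t\<bar> \<le> \<bar>L i\<bar> + \<bar>V i\<bar>" using bd[OF t, of i] by auto
        then show "\<bar>\<alpha> i * (h t i - D * ln t)\<bar> \<le> \<bar>\<alpha> i\<bar> * (\<bar>L i\<bar> + \<bar>V i\<bar>)"
          by (simp add: abs_mult mult_left_mono)
      qed
      finally show ?thesis .
    qed
    ultimately show ?thesis using ineq[OF t] by linarith
  qed
  define s where "s = (B + 1) / (D * S)"
  have "D * ln (exp s) * S \<le> B" by (rule key) simp
  moreover have "D * ln (exp s) * S = B + 1"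
    using D S0 by (simp add: s_def S_def field_simps)
  ultimately show False by simp
qed

lemma coord_meas:
  assumes "j \<in> I"
  shows "(\<lambda>\<omega>. \<omega> j) \<in> borel_measurable (PiM I (\<lambda>_. U::'a::euclidean_space measure))"
proof -
  have "(\<lambda>\<omega>. \<omega> j) \<in> measurable (PiM I (\<lambda>_. U::'a measure)) U"
    by (rule measurable_component_singleton) (rule assms)
  also have "measurable (PiM I (\<lambda>_. U::'a measure)) U = borel_measurable (PiM I (\<lambda>_. U::'a measure))"
    by (rule measurable_cong_sets) simp_all
  finally show ?thesis .
qed

lemma cont_coord:
  fixes j m :: nat
  assumes j: "j < m" and t: "t \<noteq> 0"
  shows "continuous_rv (PiM {..<m} (\<lambda>_. U::'a::euclidean_space measure)) (\<lambda>\<omega>. t *\<^sub>R \<omega> j)"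
  unfolding continuous_rv_def
proof
  let ?P = "PiM {..<m} (\<lambda>_. U::'a measure)"
  have [measurable]: "(\<lambda>\<omega>. \<omega> j) \<in> borel_measurable ?P" using j by (intro coord_meas) simp
  show Z: "(\<lambda>\<omega>. t *\<^sub>R \<omega> j) \<in> borel_measurable ?P" by measurable
  show "absolutely_continuous lborel (distr ?P lborel (\<lambda>\<omega>. t *\<^sub>R \<omega> j))"
    unfolding absolutely_continuous_def
  proof
    fix A :: "'a set" assume A: "A \<in> null_sets lborel"
    then have Ab: "A \<in> sets borel" by auto
    define c where "c = (\<lambda>j'. if j' = j then t else 0)"
    have sumeq: "(\<lambda>\<omega>::nat \<Rightarrow> 'a. \<Sum>j'<m. c j' *\<^sub>R \<omega> j') = (\<lambda>\<omega>. t *\<^sub>R \<omega> j)"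
    proof
      fix \<omega> :: "nat \<Rightarrow> 'a"
      have "(\<Sum>j'<m. c j' *\<^sub>R \<omega> j') = (\<Sum>j'<m. if j' = j then t *\<^sub>R \<omega> j' else 0)"
        by (intro sum.cong) (auto simp: c_def)
      also have "\<dots> = t *\<^sub>R \<omega> j" using j by (simp add: sum.delta)
      finally show "(\<Sum>j'<m. c j' *\<^sub>R \<omega> j') = t *\<^sub>R \<omega> j" .
    qed
    have "ennreal (\<bar>c j\<bar> ^ DIM('a)) * emeasure ?P ((\<lambda>\<omega>. \<Sum>j'<m. c j' *\<^sub>R \<omega> j') -` A \<inter> space ?P)
       \<le> emeasure lborel A"
      using key_bound[of j m c A] j t Ab by (simp add: c_def)
    then have "ennreal (\<bar>t\<bar> ^ DIM('a)) * emeasure ?P ((\<lambda>\<omega>. t *\<^sub>R \<omega> j) -` A \<inter> space ?P) \<le> 0"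
      using null_setsD1[OF A] unfolding sumeq by (simp add: c_def)
    then have "emeasure ?P ((\<lambda>\<omega>. t *\<^sub>R \<omega> j) -` A \<inter> space ?P) = 0"
      using t by (auto simp: ennreal_zero_less_mult_iff)
    then show "A \<in> null_sets (distr ?P lborel (\<lambda>\<omega>. t *\<^sub>R \<omega> j))"
      using Ab Z by (auto simp: null_sets_def emeasure_distr)
  qed
qed

lemma indep_coord:
  fixes m :: nat
  assumes m: "0 < m"
  shows "prob_space.indep_vars (PiM {..<m} (\<lambda>_. U::'a::euclidean_space measure)) (\<lambda>_. borel)
           (\<lambda>j \<omega>. t *\<^sub>R \<omega> j) {..<m}"
proof -
  let ?P = "PiM {..<m} (\<lambda>_. U::'a measure)"
  interpret prob_space ?P by (rule prob_space_PiM) (rule prob_U)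
  have ne: "{..<m} \<noteq> {}" using m by auto
  have rv: "random_variable borel (\<lambda>\<omega>. \<omega> j)" if "j \<in> {..<m}" for j
    using that by (rule coord_meas)
  have "indep_vars (\<lambda>_. borel) (\<lambda>j \<omega>. \<omega> j) {..<m}"
  proof (subst indep_vars_iff_distr_eq_PiM'[OF ne rv], assumption)
    have "distr ?P (\<Pi>\<^sub>M i\<in>{..<m}. borel) (\<lambda>x. \<lambda>i\<in>{..<m}. x i) = distr ?P ?P (\<lambda>x. x)"
      by (intro distr_cong) (auto simp: space_PiM intro!: sets_PiM_cong)
    also have "\<dots> = ?P" by simp
    also have "\<dots> = (\<Pi>\<^sub>M i\<in>{..<m}. distr ?P borel (\<lambda>\<omega>. \<omega> i))"
    proof (rule PiM_cong)
      fix i assume i: "i \<in> {..<m}"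
      have "distr ?P borel (\<lambda>\<omega>. \<omega> i) = distr ?P U (\<lambda>\<omega>. \<omega> i)"
        by (intro distr_cong) auto
      also have "\<dots> = U" by (rule distr_PiM_component[OF prob_U i])
      finally show "U = distr ?P borel (\<lambda>\<omega>. \<omega> i)" ..
    qed simp
    finally show "distr ?P (\<Pi>\<^sub>M i\<in>{..<m}. borel) (\<lambda>x. \<lambda>i\<in>{..<m}. x i) =
        (\<Pi>\<^sub>M i\<in>{..<m}. distr ?P borel (\<lambda>\<omega>. \<omega> i))" .
  qed
  then show ?thesis
    by (rule indep_vars_compose2[where Y="\<lambda>_ x. t *\<^sub>R x"]) simp
qed



theorem mainTheorem3:
  fixes n m :: nat and a :: "nat \<Rightarrow> nat \<Rightarrow> real" and \<alpha> :: "nat \<Rightarrow> real"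
  assumes rows: "\<forall>i<n. \<exists>j<m. a i j \<noteq> 0"
    and ineq: "\<And>(M :: (nat \<Rightarrow> 'a::euclidean_space) measure) (Z :: nat \<Rightarrow> (nat \<Rightarrow> 'a) \<Rightarrow> 'a).
       prob_space M \<Longrightarrow>
       prob_space.indep_vars M (\<lambda>_. borel) Z {..<m} \<Longrightarrow>
       (\<forall>j<m. continuous_rv M (Z j)) \<Longrightarrow>
       (\<forall>i<n. finite_diff_entropy M (\<lambda>\<omega>. \<Sum>j<m. a i j *\<^sub>R Z j \<omega>)) \<Longrightarrow>
       (\<Sum>i<n. \<alpha> i * diff_entropy M (\<lambda>\<omega>. \<Sum>j<m. a i j *\<^sub>R Z j \<omega>)) \<le> 0"
  shows "(\<Sum>i<n. \<alpha> i) = 0"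
proof (cases "n = 0")
  case True then show ?thesis by simp
next
  case False
  then have m: "0 < m" using rows by (metis gr0I less_nat_zero_code)
  have "\<forall>i. \<exists>j. i < n \<longrightarrow> j < m \<and> a i j \<noteq> 0" using rows by blast
  then obtain ji where ji: "\<And>i. i < n \<Longrightarrow> ji i < m \<and> a i (ji i) \<noteq> 0" by metis
  define P where "P = PiM {..<m} (\<lambda>_. U::'a measure)"
  define D where "D = real DIM('a)"
  have Dpos: "0 < D" by (simp add: D_def)
  define h where "h t i = diff_entropy P (\<lambda>\<omega>. \<Sum>j<m. a i j *\<^sub>R (t *\<^sub>R \<omega> j))" for t i
  have feq: "(\<lambda>\<omega>. \<Sum>j<m. a i j *\<^sub>R (t *\<^sub>R \<omega> j)) = (\<lambda>\<omega>::nat \<Rightarrow> 'a. \<Sum>j<m. (a i j * t) *\<^sub>R \<omega> j)" for i t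
    by simp
  have RF: "finite_diff_entropy P (\<lambda>\<omega>. \<Sum>j<m. a i j *\<^sub>R (t *\<^sub>R \<omega> j)) \<and>
      D * ln \<bar>a i (ji i) * t\<bar> \<le> h t i \<and> h t i \<le> D * ln (2 * (\<Sum>j<m. \<bar>a i j * t\<bar>))"
    if t: "0 < t" and i: "i < n" for t i
    using row_facts[of "ji i" m "\<lambda>j. a i j * t"] ji[OF i] t
    unfolding h_def feq P_def D_def by simp
  have PP: "prob_space P" unfolding P_def by (rule prob_space_PiM) (rule prob_U)
  have ineqt: "(\<Sum>i<n. \<alpha> i * h t i) \<le> 0" if t: "0 < t" for t
    unfolding h_def
  proof (rule ineq[OF PP])
    show "prob_space.indep_vars P (\<lambda>_. borel) (\<lambda>j \<omega>. t *\<^sub>R \<omega> j) {..<m}"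
      unfolding P_def by (rule indep_coord[OF m])
    show "\<forall>j<m. continuous_rv P (\<lambda>\<omega>. t *\<^sub>R \<omega> j)"
      using t unfolding P_def by (auto intro: cont_coord)
    show "\<forall>i<n. finite_diff_entropy P (\<lambda>\<omega>. \<Sum>j<m. a i j *\<^sub>R (t *\<^sub>R \<omega> j))"
      using RF[OF t] by blast
  qed
  define L where "L i = D * ln \<bar>a i (ji i)\<bar>" for i
  define V where "V i = D * ln (2 * (\<Sum>j<m. \<bar>a i j\<bar>))" for i
  have bd: "L i \<le> h t i - D * ln t \<and> h t i - D * ln t \<le> V i" if t: "0 < t" and i: "i < n" for t i
  proof -
    have a0: "0 < \<bar>a i (ji i)\<bar>" using ji[OF i] by simp
    have r0: "0 < (\<Sum>j<m. \<bar>a i j\<bar>)"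
      using ji[OF i] by (intro sum_pos2[of _ "ji i"]) auto
    have l: "ln \<bar>a i (ji i) * t\<bar> = ln \<bar>a i (ji i)\<bar> + ln t"
      using a0 t by (simp add: abs_mult ln_mult)
    have s: "(\<Sum>j<m. \<bar>a i j * t\<bar>) = (\<Sum>j<m. \<bar>a i j\<bar>) * t"
      using t by (simp add: abs_mult sum_distrib_right)
    have u: "ln (2 * (\<Sum>j<m. \<bar>a i j * t\<bar>)) = ln (2 * (\<Sum>j<m. \<bar>a i j\<bar>)) + ln t"
      unfolding s using r0 t by (simp add: ln_mult mult.assoc)
    show ?thesis using RF[OF t i] l u by (simp add: L_def V_def algebra_simps)
  qed
  show ?thesis by (rule final_arith[OF Dpos ineqt bd])
qed

end
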